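(* Let $n\geq 3$, $p \geq 2$ and $m\geq 1$ be integers, and let $c$ be an $a$-packing coloring of $FSSD_m(K_n \star P_p)$ with $a \leq n+3$. Then $c(u_i)\neq 1$ for all $i\in\{1,\dots,n\}$, and $c(v_{i,g})\neq 1$ for all $i\in\{1,\dots,n\}$ and $g\in\{1,\dots,p\}$.
   Context: All graphs are finite and simple. An $a$-packing coloring of a graph $H$ is a map $c:V(H)\to\{1,\dots,a\}$ such that $c(x)=c(y)=i$ with $x\neq y$ implies $d_H(x,y)>i$. For a positive integer $m$, $FSSD_m(G)$ is obtained from a graph $G$ by replacing each edge $xy$ by a copy of $K_{2,m}$: the edge $xy$ is deleted and $m$ new vertices are added, each adjacent to exactly $x$ and $y$. The neighborhood corona $G\star H$ of graphs $G$ (with vertices $w_1,\dots,w_{n}$) and $H$ consists of one copy of $G$ and $n$ copies $H_1,\dots,H_n$ of $H$ (each retaining the edges of $H$), where every vertex of $H_i$ is additionally joined to every neighbor of $w_i$ in $G$. $K_n$ is the complete graph and $P_p$ the path on $p$ vertices. In $K_n\star P_p$ the vertices of $K_n$ are $u_1,\dots,u_n$ and the vertices of the copy of $P_p$ corresponding to $u_i$ are $v_{i,1},\dots,v_{i,p}$; these same names denote the corresponding (non-subdivided) vertices of $FSSD_m(K_n\star P_p)$. *)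

theory Defs
  imports "HOL-Library.Extended_Nat"
begin

text \<open>A (finite, simple) graph is given by a vertex set and a symmetric irreflexive
adjacency relation (restricted to the vertex set).\<close>
type_synonym 'a graph = "'a set \<times> ('a \<Rightarrow> 'a \<Rightarrow> bool)"

definition verts :: "'a graph \<Rightarrow> 'a set" where "verts G = fst G"
definition adj :: "'a graph \<Rightarrow> 'a \<Rightarrow> 'a \<Rightarrow> bool" where "adj G = snd G"

definition gdist :: "'a graph \<Rightarrow> 'a \<Rightarrow> 'a \<Rightarrow> enat" where
  "gdist G x y = (if \<exists>k. (adj G ^^ k) x y then enat (LEAST k. (adj G ^^ k) x y) else \<infinity>)"

definition packing_coloring :: "'a graph \<Rightarrow> nat \<Rightarrow> ('a \<Rightarrow> nat) \<Rightarrow> bool" where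
  "packing_coloring H a c \<longleftrightarrow>
     (\<forall>x\<in>verts H. c x \<in> {1..a}) \<and>
     (\<forall>x\<in>verts H. \<forall>y\<in>verts H. x \<noteq> y \<and> c x = c y \<longrightarrow> gdist H x y > enat (c x))"

definition complete_graph :: "nat \<Rightarrow> nat graph" where
  "complete_graph n = ({1..n}, \<lambda>i j. i \<in> {1..n} \<and> j \<in> {1..n} \<and> i \<noteq> j)"

definition path_graph :: "nat \<Rightarrow> nat graph" where
  "path_graph p = ({1..p}, \<lambda>i j. i \<in> {1..p} \<and> j \<in> {1..p} \<and> (j = i + 1 \<or> i = j + 1))"

text \<open>Neighborhood corona: vertices Inl w (copy of G) and Inr (w,h) (vertex h of copy H_w).\<close>
definition nbh_corona :: "'a graph \<Rightarrow> 'b graph \<Rightarrow> ('a + ('a \<times> 'b)) graph" where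
  "nbh_corona G H =
    (let V = Inl ` verts G \<union> {Inr (w, h) | w h. w \<in> verts G \<and> h \<in> verts H} in
     (V, \<lambda>x y. x \<in> V \<and> y \<in> V \<and>
        (case (x, y) of
           (Inl u, Inl v) \<Rightarrow> adj G u v
         | (Inr (w, h), Inr (w', h')) \<Rightarrow> w = w' \<and> adj H h h'
         | (Inr (w, h), Inl v) \<Rightarrow> adj G w v
         | (Inl v, Inr (w, h)) \<Rightarrow> adj G w v)))"

datatype 'a fssd_vertex = Orig 'a | Sub "'a set" nat

definition edges :: "'a graph \<Rightarrow> 'a set set" where
  "edges G = {{x, y} | x y. x \<in> verts G \<and> y \<in> verts G \<and> adj G x y}"

text \<open>FSSD_m(G): every edge e = xy is replaced by m new vertices Sub e 1, ..., Sub e m,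
 each adjacent exactly to x and y; the edge xy itself is deleted.\<close>
definition FSSD :: "nat \<Rightarrow> 'a graph \<Rightarrow> 'a fssd_vertex graph" where
  "FSSD m G =
    (Orig ` verts G \<union> {Sub e k | e k. e \<in> edges G \<and> k \<in> {1..m}},
     \<lambda>x y. (\<exists>v e k. x = Orig v \<and> y = Sub e k \<and> e \<in> edges G \<and> v \<in> e \<and> k \<in> {1..m})
         \<or> (\<exists>v e k. y = Orig v \<and> x = Sub e k \<and> e \<in> edges G \<and> v \<in> e \<and> k \<in> {1..m}))"

end

theory Submission
  imports Defs
begin


abbreviation GG :: "nat \<Rightarrow> nat \<Rightarrow> (nat + nat \<times> nat) graph" where
  "GG n p \<equiv> nbh_corona (complete_graph n) (path_graph p)"

lemma verts_GG: "verts (GG n p) = Inl ` {1..n} \<union> {Inr (w, h) | w h. w \<in> {1..n} \<and> h \<in> {1..p}}"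
  by (simp add: nbh_corona_def verts_def complete_graph_def path_graph_def Let_def)

lemma adj_GG_ll[simp]: "adj (GG n p) (Inl a) (Inl b) \<longleftrightarrow> a \<in> {1..n} \<and> b \<in> {1..n} \<and> a \<noteq> b"
  by (auto simp add: nbh_corona_def verts_def adj_def complete_graph_def path_graph_def Let_def)

lemma adj_GG_rr[simp]: "adj (GG n p) (Inr (a,h)) (Inr (b,h')) \<longleftrightarrow> a \<in> {1..n} \<and> h \<in> {1..p} \<and> h' \<in> {1..p} \<and> a = b \<and> (h' = h + 1 \<or> h = h' + 1)"
  by (auto simp add: nbh_corona_def verts_def adj_def complete_graph_def path_graph_def Let_def)

lemma adj_GG_rl[simp]: "adj (GG n p) (Inr (a,h)) (Inl b) \<longleftrightarrow> a \<in> {1..n} \<and> b \<in> {1..n} \<and> h \<in> {1..p} \<and> a \<noteq> b"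
  by (auto simp add: nbh_corona_def verts_def adj_def complete_graph_def path_graph_def Let_def)

lemma adj_GG_lr[simp]: "adj (GG n p) (Inl b) (Inr (a,h)) \<longleftrightarrow> a \<in> {1..n} \<and> b \<in> {1..n} \<and> h \<in> {1..p} \<and> a \<noteq> b"
  by (auto simp add: nbh_corona_def verts_def adj_def complete_graph_def path_graph_def Let_def)

lemma adj_GG_verts: "adj (GG n p) x y \<Longrightarrow> x \<in> verts (GG n p) \<and> y \<in> verts (GG n p)"
  by (simp add: nbh_corona_def verts_def adj_def Let_def)

lemma verts_FSSD: "verts (FSSD m G) = Orig ` verts G \<union> {Sub e k | e k. e \<in> edges G \<and> k \<in> {1..m}}"
  by (simp add: FSSD_def verts_def)

lemma adj_FSSD_os[simp]: "adj (FSSD m G) (Orig x) (Sub e k) \<longleftrightarrow> e \<in> edges G \<and> x \<in> e \<and> k \<in> {1..m}"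
  by (auto simp add: FSSD_def adj_def)
lemma adj_FSSD_so[simp]: "adj (FSSD m G) (Sub e k) (Orig x) \<longleftrightarrow> e \<in> edges G \<and> x \<in> e \<and> k \<in> {1..m}"
  by (auto simp add: FSSD_def adj_def)

lemma edge_in: "adj G x y \<Longrightarrow> x \<in> verts G \<Longrightarrow> y \<in> verts G \<Longrightarrow> {x,y} \<in> edges G"
  by (auto simp add: edges_def)

definition reach :: "'a graph \<Rightarrow> nat \<Rightarrow> 'a \<Rightarrow> 'a \<Rightarrow> bool" where
  "reach H k x y = (adj H ^^ k) x y"

lemma reach_trans: "reach H i x y \<Longrightarrow> reach H j y z \<Longrightarrow> reach H (i + j) x z"
  unfolding reach_def by (rule relpowp_trans)

lemma reach_1: "adj H x y \<Longrightarrow> reach H 1 x y"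
  unfolding reach_def by (simp only: relpowp_1)

lemma reach_0: "reach H 0 x x"
  unfolding reach_def by simp

lemma gdist_le: "reach H k x y \<Longrightarrow> gdist H x y \<le> enat k"
  unfolding reach_def gdist_def by (auto intro: Least_le)

lemma pack_lt:
  assumes "packing_coloring H a c" "x \<in> verts H" "y \<in> verts H" "x \<noteq> y" "c x = c y" "reach H k x y"
  shows "c x < k"
proof -
  have "gdist H x y > enat (c x)" using assms(1-5) unfolding packing_coloring_def by blast
  moreover have "gdist H x y \<le> enat k" using gdist_le[OF assms(6)] .
  ultimately show ?thesis by (metis enat_ord_simps(2) order_less_le_trans)
qed

lemma pack_range: "packing_coloring H a c \<Longrightarrow> x \<in> verts H \<Longrightarrow> c x \<in> {1..a}"
  unfolding packing_coloring_def by blast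



lemma sub_vert: "adj (GG n p) x y \<Longrightarrow> 1 \<le> m \<Longrightarrow> Sub {x,y} 1 \<in> verts (FSSD m (GG n p))"
  using adj_GG_verts[of n p x y] edge_in[of "GG n p" x y] by (auto simp: verts_FSSD)

lemma orig_vert: "x \<in> verts (GG n p) \<Longrightarrow> Orig x \<in> verts (FSSD m (GG n p))"
  by (simp add: verts_FSSD)

lemma r_os1: "adj (GG n p) x y \<Longrightarrow> 1 \<le> m \<Longrightarrow> reach (FSSD m (GG n p)) 1 (Orig x) (Sub {x,y} 1)"
  using adj_GG_verts[of n p x y] edge_in[of "GG n p" x y] by - (rule reach_1, auto)
lemma r_so1: "adj (GG n p) x y \<Longrightarrow> 1 \<le> m \<Longrightarrow> reach (FSSD m (GG n p)) 1 (Sub {x,y} 1) (Orig x)"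
  using adj_GG_verts[of n p x y] edge_in[of "GG n p" x y] by - (rule reach_1, auto)
lemma r_os2: "adj (GG n p) x y \<Longrightarrow> 1 \<le> m \<Longrightarrow> reach (FSSD m (GG n p)) 1 (Orig y) (Sub {x,y} 1)"
  using adj_GG_verts[of n p x y] edge_in[of "GG n p" x y] by - (rule reach_1, auto)
lemma r_so2: "adj (GG n p) x y \<Longrightarrow> 1 \<le> m \<Longrightarrow> reach (FSSD m (GG n p)) 1 (Sub {x,y} 1) (Orig y)"
  using adj_GG_verts[of n p x y] edge_in[of "GG n p" x y] by - (rule reach_1, auto)

lemma r_oo: "adj (GG n p) x y \<Longrightarrow> 1 \<le> m \<Longrightarrow> reach (FSSD m (GG n p)) 2 (Orig x) (Orig y)"
  using reach_trans[OF r_os1 r_so2, of n p x y m] by (simp add: numeral_2_eq_2)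



type_synonym ov = "nat + nat \<times> nat"
datatype sv = SO ov | SS ov ov

fun adjS :: "ov \<Rightarrow> ov \<Rightarrow> bool" where
  "adjS (Inl a) (Inl b) = (a \<noteq> b)"
| "adjS (Inr (a,h)) (Inr (b,h')) = (a = b \<and> h \<noteq> h')"
| "adjS (Inr (a,h)) (Inl b) = (a \<noteq> b)"
| "adjS (Inl b) (Inr (a,h)) = (a \<noteq> b)"

fun inr :: "nat \<Rightarrow> ov \<Rightarrow> bool" where
  "inr n0 (Inl a) = (1 \<le> a \<and> a \<le> n0)"
| "inr n0 (Inr (a,h)) = (1 \<le> a \<and> a \<le> n0 \<and> (h = 1 \<or> h = 2))"

fun phi :: "(nat \<Rightarrow> nat) \<Rightarrow> (nat \<Rightarrow> nat) \<Rightarrow> ov \<Rightarrow> ov" where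
  "phi \<sigma> \<tau> (Inl a) = Inl (\<sigma> a)"
| "phi \<sigma> \<tau> (Inr (a,h)) = Inr (\<sigma> a, \<tau> h)"

fun Phi :: "(nat \<Rightarrow> nat) \<Rightarrow> (nat \<Rightarrow> nat) \<Rightarrow> sv \<Rightarrow> ov fssd_vertex" where
  "Phi \<sigma> \<tau> (SO x) = Orig (phi \<sigma> \<tau> x)"
| "Phi \<sigma> \<tau> (SS x y) = Sub {phi \<sigma> \<tau> x, phi \<sigma> \<tau> y} 1"

definition good :: "nat \<Rightarrow> nat \<Rightarrow> nat \<Rightarrow> (nat \<Rightarrow> nat) \<Rightarrow> (nat \<Rightarrow> nat) \<Rightarrow> bool" where
  "good n0 n p \<sigma> \<tau> \<longleftrightarrow> (\<forall>a\<in>{1..n0}. \<sigma> a \<in> {1..n}) \<and> inj_on \<sigma> {1..n0} \<and>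
     \<tau> 1 \<in> {1..p} \<and> \<tau> 2 \<in> {1..p} \<and> (\<tau> 2 = \<tau> 1 + 1 \<or> \<tau> 1 = \<tau> 2 + 1)"

lemma goodD:
  assumes "good n0 n p \<sigma> \<tau>"
  shows "\<forall>a\<in>{1..n0}. \<sigma> a \<in> {1..n}" "inj_on \<sigma> {1..n0}" "\<tau> 1 \<in> {1..p}" "\<tau> 2 \<in> {1..p}"
    "\<tau> 2 = \<tau> 1 + 1 \<or> \<tau> 1 = \<tau> 2 + 1"
proof -
  have all: "(\<forall>a\<in>{1..n0}. \<sigma> a \<in> {1..n}) \<and> inj_on \<sigma> {1..n0} \<and> \<tau> 1 \<in> {1..p} \<and> \<tau> 2 \<in> {1..p} \<and>
    (\<tau> 2 = \<tau> 1 + 1 \<or> \<tau> 1 = \<tau> 2 + 1)" using assms unfolding good_def .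
  show "\<forall>a\<in>{1..n0}. \<sigma> a \<in> {1..n}" using all by (rule conjunct1)
  show "inj_on \<sigma> {1..n0}" using all by (elim conjE)
  show "\<tau> 1 \<in> {1..p}" using all by (elim conjE)
  show "\<tau> 2 \<in> {1..p}" using all by (elim conjE)
  show "\<tau> 2 = \<tau> 1 + 1 \<or> \<tau> 1 = \<tau> 2 + 1" using all by (elim conjE)
qed

lemma phi_adj:
  assumes "good n0 n p \<sigma> \<tau>" "inr n0 x" "inr n0 y" "adjS x y"
  shows "adj (GG n p) (phi \<sigma> \<tau> x) (phi \<sigma> \<tau> y)"
proof -
  have s: "\<And>a. 1 \<le> a \<and> a \<le> n0 \<longrightarrow> \<sigma> a \<in> {1..n}" using goodD(1)[OF assms(1)] by auto
  have si: "1 \<le> a \<and> a \<le> n0 \<and> 1 \<le> b \<and> b \<le> n0 \<and> a \<noteq> b \<longrightarrow> \<sigma> a \<noteq> \<sigma> b" for a b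
    using goodD(2)[OF assms(1)] inj_onD[of \<sigma> "{1..n0}" a b] by auto
  have t: "\<tau> 1 \<in> {1..p}" "\<tau> 2 \<in> {1..p}" "\<tau> 2 = \<tau> 1 + 1 \<or> \<tau> 1 = \<tau> 2 + 1" using goodD(3-5)[OF assms(1)] by auto
  have t2: "\<And>h h'. (h = 1 \<or> h = 2) \<and> (h' = 1 \<or> h' = 2) \<and> h \<noteq> h' \<longrightarrow> \<tau> h \<in> {1..p} \<and> \<tau> h' \<in> {1..p} \<and> (\<tau> h' = \<tau> h + 1 \<or> \<tau> h = \<tau> h' + 1)"
    using t by auto
  show ?thesis
  proof (cases x)
    case (Inl a)
    show ?thesis
    proof (cases y)
      case (Inl b) then show ?thesis using \<open>x = Inl a\<close> assms(2-4) s[of a] s[of b] si[of a b] by simp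
    next
      case (Inr bh) then obtain b h where "y = Inr (b,h)" by (cases bh) auto
      then show ?thesis using Inl assms(2-4) s[of a] s[of b] si[of a b] t by auto
    qed
  next
    case (Inr ah) then obtain a h where x: "x = Inr (a,h)" by (cases ah) auto
    show ?thesis
    proof (cases y)
      case (Inl b) then show ?thesis using x assms(2-4) s[of a] s[of b] si[of a b] t by auto
    next
      case (Inr bh) then obtain b h' where "y = Inr (b,h')" by (cases bh) auto
      then show ?thesis using x assms(2-4) s[of a] t2[of h h'] by auto
    qed
  qed
qed

lemma phi_vert:
  assumes "good n0 n p \<sigma> \<tau>" "inr n0 x"
  shows "phi \<sigma> \<tau> x \<in> verts (GG n p)"
  using assms(2) goodD(1,3,4)[OF assms(1)] by (cases x) (auto simp: verts_GG)

lemma phi_inj: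
  assumes "good n0 n p \<sigma> \<tau>" "inr n0 x" "inr n0 y" "phi \<sigma> \<tau> x = phi \<sigma> \<tau> y"
  shows "x = y"
proof -
  have si: "1 \<le> a \<and> a \<le> n0 \<and> 1 \<le> b \<and> b \<le> n0 \<and> \<sigma> a = \<sigma> b \<longrightarrow> a = b" for a b
    using goodD(2)[OF assms(1)] inj_onD[of \<sigma> "{1..n0}" a b] by simp
  have t: "\<tau> 1 \<noteq> \<tau> 2" using goodD(5)[OF assms(1)] by linarith
  have t2: "(h = 1 \<or> h = 2) \<and> (h' = 1 \<or> h' = 2) \<and> \<tau> h = \<tau> h' \<longrightarrow> h = h'" for h h'
    using t by auto
  show ?thesis
  proof (cases x)
    case (Inl a)
    show ?thesis
    proof (cases y)
      case (Inl b) then show ?thesis using \<open>x = Inl a\<close> assms(2-4) si[of a b] by simp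
    next
      case (Inr bh) then obtain b h where "y = Inr (b,h)" by (cases bh) auto
      then show ?thesis using Inl assms(4) by simp
    qed
  next
    case (Inr ah) then obtain a h where x: "x = Inr (a,h)" by (cases ah) auto
    show ?thesis
    proof (cases y)
      case (Inl b) then show ?thesis using x assms(4) by simp
    next
      case (Inr bh) then obtain b h' where "y = Inr (b,h')" by (cases bh) auto
      then show ?thesis using x assms(2-4) si[of a b] t2[of h h'] by simp
    qed
  qed
qed

fun wfs :: "nat \<Rightarrow> sv \<Rightarrow> bool" where
  "wfs n0 (SO x) = inr n0 x"
| "wfs n0 (SS x y) = (inr n0 x \<and> inr n0 y \<and> adjS x y)"

lemma Phi_vert:
  assumes "good n0 n p \<sigma> \<tau>" "wfs n0 s" "1 \<le> m"
  shows "Phi \<sigma> \<tau> s \<in> verts (FSSD m (GG n p))"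
proof (cases s)
  case (SO x) then show ?thesis using assms by (auto intro: orig_vert phi_vert)
next
  case (SS x y) then show ?thesis using assms sub_vert[OF phi_adj[OF assms(1), of x y] assms(3)] by auto
qed

definition swapped :: "sv \<Rightarrow> sv \<Rightarrow> bool" where
  "swapped s t \<longleftrightarrow> (case s of SS x y \<Rightarrow> t = SS y x | _ \<Rightarrow> False)"

lemma Phi_inj:
  assumes "good n0 n p \<sigma> \<tau>" "wfs n0 s" "wfs n0 t" "Phi \<sigma> \<tau> s = Phi \<sigma> \<tau> t"
  shows "s = t \<or> swapped s t"
proof (cases s)
  case (SO x)
  then show ?thesis using assms phi_inj[OF assms(1)] by (cases t) auto
next
  case (SS x y)
  then obtain x' y' where t: "t = SS x' y'" using assms by (cases t) auto
  have "{phi \<sigma> \<tau> x, phi \<sigma> \<tau> y} = {phi \<sigma> \<tau> x', phi \<sigma> \<tau> y'}" using assms SS t by simp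
  then have "(phi \<sigma> \<tau> x = phi \<sigma> \<tau> x' \<and> phi \<sigma> \<tau> y = phi \<sigma> \<tau> y') \<or> (phi \<sigma> \<tau> x = phi \<sigma> \<tau> y' \<and> phi \<sigma> \<tau> y = phi \<sigma> \<tau> x')"
    by (simp add: doubleton_eq_iff)
  then show ?thesis using assms SS t phi_inj[OF assms(1)] by (auto simp: swapped_def)
qed

definition dO :: "ov list \<Rightarrow> ov \<Rightarrow> ov \<Rightarrow> nat" where
  "dO V x y = (if x = y then 0 else if adjS x y then 2 else
     if list_ex (\<lambda>z. adjS x z \<and> adjS z y) V then 4 else 100)"

fun anch :: "sv \<Rightarrow> (ov \<times> nat) list" where
  "anch (SO x) = [(x,0)]"
| "anch (SS x y) = [(x,1),(y,1)]"

definition dS :: "ov list \<Rightarrow> sv \<Rightarrow> sv \<Rightarrow> nat" where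
  "dS V s t = Min (set [i + dO V x y + j. (x,i) \<leftarrow> anch s, (y,j) \<leftarrow> anch t])"

lemma dO_reach:
  assumes "good n0 n p \<sigma> \<tau>" "list_all (inr n0) V" "inr n0 x" "inr n0 y" "dO V x y < 100" "1 \<le> m"
  shows "reach (FSSD m (GG n p)) (dO V x y) (Orig (phi \<sigma> \<tau> x)) (Orig (phi \<sigma> \<tau> y))"
proof -
  consider "x = y" | "x \<noteq> y" "adjS x y" | "x \<noteq> y" "\<not> adjS x y" "\<exists>z\<in>set V. adjS x z \<and> adjS z y"
    using assms(5) by (auto simp: dO_def list_ex_iff split: if_splits)
  then show ?thesis
  proof cases
    case 1 then show ?thesis by (simp add: dO_def reach_0)
  next
    case 2 then show ?thesis using r_oo[OF phi_adj[OF assms(1,3,4)] assms(6)] by (simp add: dO_def)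
  next
    case 3
    then obtain z where z: "z \<in> set V" "adjS x z" "adjS z y" by blast
    have iz: "inr n0 z" using z(1) assms(2) by (simp add: list_all_iff)
    have "reach (FSSD m (GG n p)) (2 + 2) (Orig (phi \<sigma> \<tau> x)) (Orig (phi \<sigma> \<tau> y))"
      by (rule reach_trans[OF r_oo[OF phi_adj[OF assms(1,3) iz z(2)] assms(6)]
            r_oo[OF phi_adj[OF assms(1) iz assms(4) z(3)] assms(6)]])
    then show ?thesis using 3 by (simp add: dO_def list_ex_iff)
  qed
qed

lemma anch_reach:
  assumes "good n0 n p \<sigma> \<tau>" "wfs n0 s" "(x,i) \<in> set (anch s)" "1 \<le> m"
  shows "inr n0 x \<and> reach (FSSD m (GG n p)) i (Phi \<sigma> \<tau> s) (Orig (phi \<sigma> \<tau> x))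
     \<and> reach (FSSD m (GG n p)) i (Orig (phi \<sigma> \<tau> x)) (Phi \<sigma> \<tau> s)"
proof (cases s)
  case (SO y) then show ?thesis using assms by (auto simp: reach_0)
next
  case (SS y z)
  then have a: "adj (GG n p) (phi \<sigma> \<tau> y) (phi \<sigma> \<tau> z)" using assms phi_adj by auto
  show ?thesis using assms SS r_os1[OF a assms(4)] r_so1[OF a assms(4)] r_os2[OF a assms(4)] r_so2[OF a assms(4)]
    by auto
qed

lemma dS_reach:
  assumes "good n0 n p \<sigma> \<tau>" "list_all (inr n0) V" "wfs n0 s" "wfs n0 t" "dS V s t < 100" "1 \<le> m"
  shows "reach (FSSD m (GG n p)) (dS V s t) (Phi \<sigma> \<tau> s) (Phi \<sigma> \<tau> t)"
proof -
  let ?L = "[i + dO V x y + j. (x,i) \<leftarrow> anch s, (y,j) \<leftarrow> anch t]"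
  have ne: "set ?L \<noteq> {}" by (cases s; cases t) auto
  have "dS V s t \<in> set ?L" unfolding dS_def by (rule Min_in[OF List.finite_set ne])
  then obtain x i y j where xi: "(x,i) \<in> set (anch s)" and yj: "(y,j) \<in> set (anch t)"
    and d: "dS V s t = i + dO V x y + j" by auto
  have 1: "inr n0 x" "reach (FSSD m (GG n p)) i (Phi \<sigma> \<tau> s) (Orig (phi \<sigma> \<tau> x))"
    using anch_reach[OF assms(1,3) xi assms(6)] by auto
  have 2: "inr n0 y" "reach (FSSD m (GG n p)) j (Orig (phi \<sigma> \<tau> y)) (Phi \<sigma> \<tau> t)"
    using anch_reach[OF assms(1,4) yj assms(6)] by auto
  have "dO V x y < 100" using d assms(5) by simp
  from dO_reach[OF assms(1,2) 1(1) 2(1) this assms(6)]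
  have "reach (FSSD m (GG n p)) (dO V x y) (Orig (phi \<sigma> \<tau> x)) (Orig (phi \<sigma> \<tau> y))" .
  from reach_trans[OF reach_trans[OF 1(2) this] 2(2)] show ?thesis using d by simp
qed



fun okc :: "nat list \<Rightarrow> nat list \<Rightarrow> nat \<Rightarrow> bool" where
  "okc (d#ds) (x#xs) c = ((x \<noteq> c \<or> c < d) \<and> okc ds xs c)"
| "okc _ _ c = True"

fun srch :: "nat list list \<Rightarrow> nat list list \<Rightarrow> nat list \<Rightarrow> bool" where
  "srch [] _ cs = True"
| "srch (con#cr) [] cs = True"
| "srch (con#cr) (dm#dr) cs = list_ex (\<lambda>c. okc con cs c \<and> srch cr dr (c # cs)) dm"

lemma srch_sound:
  "length doms = length cons \<Longrightarrow> length cols = length cons \<Longrightarrow>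
   (\<forall>k<length cons. cols!k \<in> set (doms!k) \<and> okc (cons!k) (rev (take k cols) @ cs) (cols!k)) \<Longrightarrow>
   srch cons doms cs"
proof (induction cons arbitrary: doms cols cs)
  case Nil then show ?case by simp
next
  case (Cons con cr)
  obtain dm dr where d: "doms = dm # dr" using Cons.prems(1) by (cases doms) auto
  obtain c0 cr' where c: "cols = c0 # cr'" using Cons.prems(2) by (cases cols) auto
  have 0: "c0 \<in> set dm" "okc con cs c0" using Cons.prems(3)[rule_format, of 0] d c by auto
  have "srch cr dr (c0 # cs)"
  proof (rule Cons.IH)
    show "length dr = length cr" "length cr' = length cr" using Cons.prems d c by auto
    show "\<forall>k<length cr. cr' ! k \<in> set (dr ! k) \<and> okc (cr ! k) (rev (take k cr') @ c0 # cs) (cr' ! k)"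
    proof (intro allI impI)
      fix k assume "k < length cr"
      then have "Suc k < length (con # cr)" by simp
      from Cons.prems(3)[rule_format, OF this] show "cr' ! k \<in> set (dr ! k) \<and> okc (cr ! k) (rev (take k cr') @ c0 # cs) (cr' ! k)"
        using d c by simp
    qed
  qed
  then show ?case using 0 d by (auto simp: list_ex_iff)
qed

lemma okc_map: "(\<forall>x\<in>set xs. g x \<noteq> c \<or> c < f x) \<Longrightarrow> okc (map f xs) (map g xs) c"
  by (induction xs) auto

fun mkc :: "ov list \<Rightarrow> sv list \<Rightarrow> sv list \<Rightarrow> nat list list" where
  "mkc V prev [] = []"
| "mkc V prev (s#r) = map (dS V s) prev # mkc V (s#prev) r"

lemma mkc_len: "length (mkc V prev L) = length L"
  by (induction L arbitrary: prev) auto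

lemma mkc_nth: "k < length L \<Longrightarrow> mkc V prev L ! k = map (dS V (L!k)) (rev (take k L) @ prev)"
proof (induction L arbitrary: prev k)
  case Nil then show ?case by simp
next
  case (Cons s r)
  show ?case
  proof (cases k)
    case 0 then show ?thesis by simp
  next
    case (Suc k') then show ?thesis using Cons by simp
  qed
qed

definition domf :: "sv \<Rightarrow> nat \<Rightarrow> sv \<Rightarrow> nat list" where
  "domf v0 a0 s = (if s = v0 then [1] else case s of SO (Inl _) \<Rightarrow> [2..<Suc a0] | _ \<Rightarrow> [1..<Suc a0])"

definition isU :: "sv \<Rightarrow> bool" where
  "isU s = (case s of SO (Inl _) \<Rightarrow> True | _ \<Rightarrow> False)"

definition noswap :: "sv list \<Rightarrow> bool" where
  "noswap L = list_all (\<lambda>s. list_all (\<lambda>t. \<not> swapped s t) L) L"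

lemma finite_check:
  assumes g: "good n0 n p \<sigma> \<tau>" and m: "1 \<le> m"
    and pc: "packing_coloring (FSSD m (GG n p)) a c" and a: "a \<le> a0" "a0 < 100"
    and V: "list_all (inr n0) V" and L: "list_all (wfs n0) L" "distinct L" "noswap L"
    and U: "\<forall>s\<in>set L. isU s \<longrightarrow> c (Phi \<sigma> \<tau> s) \<noteq> 1"
    and v0: "c (Phi \<sigma> \<tau> v0) = 1"
  shows "srch (mkc V [] L) (map (domf v0 a0) L) []"
proof (rule srch_sound)
  let ?H = "FSSD m (GG n p)"
  let ?col = "\<lambda>s. c (Phi \<sigma> \<tau> s)"
  let ?cols = "map ?col L"
  show "length (map (domf v0 a0) L) = length (mkc V [] L)" "length ?cols = length (mkc V [] L)"
    by (simp_all add: mkc_len)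
  have wf: "\<And>s. s \<in> set L \<Longrightarrow> wfs n0 s" using L(1) by (simp add: list_all_iff)
  have rng: "\<And>s. s \<in> set L \<Longrightarrow> ?col s \<in> {1..a}"
    using pack_range[OF pc Phi_vert[OF g wf m]] by blast
  have pair: "?col t \<noteq> ?col s \<or> ?col s < dS V s t" if st: "s \<in> set L" "t \<in> set L" "s \<noteq> t" for s t
  proof (cases "?col t = ?col s")
    case True
    have ns: "\<not> swapped s t" using L(3) st unfolding noswap_def by (simp add: list_all_iff)
    have ne: "Phi \<sigma> \<tau> s \<noteq> Phi \<sigma> \<tau> t" using Phi_inj[OF g wf[OF st(1)] wf[OF st(2)]] st(3) ns by blast
    show ?thesis
    proof (cases "dS V s t < 100")
      case True
      have "?col s < dS V s t"
        by (rule pack_lt[OF pc Phi_vert[OF g wf[OF st(1)] m] Phi_vert[OF g wf[OF st(2)] m] ne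
              \<open>?col t = ?col s\<close>[symmetric] dS_reach[OF g V wf[OF st(1)] wf[OF st(2)] True m]])
      then show ?thesis by simp
    next
      case False
      then show ?thesis using rng[OF st(1)] a by auto
    qed
  qed simp
  show "\<forall>k<length (mkc V [] L). ?cols ! k \<in> set (map (domf v0 a0) L ! k) \<and>
      okc (mkc V [] L ! k) (rev (take k ?cols) @ []) (?cols ! k)"
  proof (intro allI impI conjI)
    fix k assume k: "k < length (mkc V [] L)"
    then have kL: "k < length L" by (simp add: mkc_len)
    have sk: "L ! k \<in> set L" using kL by simp
    show "?cols ! k \<in> set (map (domf v0 a0) L ! k)"
    proof -
      have r: "?col (L!k) \<in> {1..a}" using rng[OF sk] .
      show ?thesis
      proof (cases "L ! k = v0")
        case True then show ?thesis using kL v0 by (simp add: domf_def)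
      next
        case False
        show ?thesis
        proof (cases "isU (L!k)")
          case True
          then obtain b where "L ! k = SO (Inl b)" by (auto simp: isU_def split: sv.splits sum.splits)
          then show ?thesis using False True U sk r kL a by (auto simp: domf_def)
        next
          case nU: False
          then show ?thesis using False r kL a
            by (auto simp: domf_def isU_def split: sv.splits sum.splits)
        qed
      qed
    qed
    have "okc (map (dS V (L!k)) (rev (take k L))) (map ?col (rev (take k L))) (?col (L!k))"
    proof (rule okc_map, rule ballI)
      fix t assume t: "t \<in> set (rev (take k L))"
      then obtain j where j: "j < k" "t = L ! j" by (auto simp: in_set_conv_nth)
      have "L ! k \<noteq> L ! j" using L(2) j kL by (simp add: nth_eq_iff_index_eq)
      then show "?col t \<noteq> ?col (L!k) \<or> ?col (L!k) < dS V (L!k) t"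
        using pair[OF sk _ ] j kL by auto
    qed
    then show "okc (mkc V [] L ! k) (rev (take k ?cols) @ []) (?cols ! k)"
      using kL by (simp add: mkc_nth rev_map take_map)
  qed
qed


definition L3 :: "sv list" where "L3 = [SO (Inr (1,1)), SS (Inr (1,1)) (Inr (1,2)), SS (Inr (1,1)) (Inl 3), SS (Inr (1,1)) (Inl 2), SO (Inl 2), SO (Inl 3), SO (Inr (1,2)), SS (Inr (1,2)) (Inl 3), SO (Inl 1), SS (Inr (1,2)) (Inl 2), SS (Inr (3,2)) (Inl 2), SO (Inr (3,2)), SS (Inr (3,1)) (Inl 2), SO (Inr (3,1)), SS (Inr (3,1)) (Inr (3,2)), SO (Inr (2,2)), SS (Inr (2,2)) (Inl 3), SO (Inr (2,1)), SS (Inr (2,1)) (Inl 3), SS (Inr (2,1)) (Inr (2,2)), SS (Inr (3,2)) (Inl 1), SS (Inr (2,1)) (Inl 1), SS (Inr (2,2)) (Inl 1), SS (Inr (3,1)) (Inl 1), SS (Inl 2) (Inl 3), SS (Inl 1) (Inl 2), SS (Inl 1) (Inl 3)]"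
definition V3 :: "ov list" where "V3 = [Inl 1, Inl 2, Inl 3, Inr (1,1), Inr (1,2), Inr (2,1), Inr (2,2), Inr (3,1), Inr (3,2)]"
definition L4 :: "sv list" where "L4 = [SO (Inr (1,1)), SS (Inr (1,1)) (Inl 4), SS (Inr (1,1)) (Inl 2), SS (Inr (1,1)) (Inl 3), SS (Inr (1,1)) (Inr (1,2)), SO (Inl 4), SO (Inl 3), SO (Inl 2), SO (Inr (1,2)), SS (Inr (1,2)) (Inl 2), SS (Inr (1,2)) (Inl 4), SS (Inr (1,2)) (Inl 3)]"
definition V4 :: "ov list" where "V4 = [Inl 1, Inl 2, Inl 3, Inl 4, Inr (1,1), Inr (1,2), Inr (2,1), Inr (2,2), Inr (3,1), Inr (3,2), Inr (4,1), Inr (4,2)]"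

lemma L3_ok: "list_all (wfs 3) L3" "distinct L3" "noswap L3" "list_all (inr 3) V3"
  by code_simp+

lemma L4_ok: "list_all (wfs 4) L4" "distinct L4" "noswap L4" "list_all (inr 4) V4"
  by code_simp+

lemma L4_srch: "\<not> srch (mkc V4 [] L4) (map (domf (SO (Inr (1,1))) 7) L4) []"
  by code_simp

lemma L3_srch: "\<not> srch (mkc V3 [] L3) (map (domf (SO (Inr (1,1))) 6) L3) []"
  by code_simp


lemma pack_le:
  assumes "packing_coloring H a c" "x \<in> verts H" "y \<in> verts H" "x \<noteq> y" "c x = c y" "reach H k x y" "k \<le> d"
  shows "c x < d"
  using pack_lt[OF assms(1-6)] assms(7) by simp

lemma part1:
  assumes n3: "n \<ge> 3" and p2: "p \<ge> 2" and m: "m \<ge> 1"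
    and pc: "packing_coloring (FSSD m (GG n p)) a c" and a: "a \<le> n + 3" and i: "i \<in> {1..n}"
  shows "c (Orig (Inl i)) \<noteq> 1"
proof
  assume ci: "c (Orig (Inl i)) = 1"
  let ?H = "FSSD m (GG n p)"
  define J where "J = {1..n} - {i}"
  define z where "z = (\<lambda>(j::nat,h::nat). if h = 0 then (Inl j :: nat + nat \<times> nat) else Inr (j,h))"
  define f where "f = (\<lambda>jh. Sub {Inl i, z jh} (1::nat))"
  define X where "X = f ` (J \<times> {0,1,2})"
  have nb: "adj (GG n p) (Inl i) (z jh)" if "jh \<in> J \<times> {0,1,2}" for jh
    using that i p2 by (auto simp: J_def z_def)
  have injf: "inj_on f (J \<times> {0,1,2})"
  proof (rule inj_onI)
    fix x y assume x: "x \<in> J \<times> {0,1,2}" and y: "y \<in> J \<times> {0,1,2}" and e: "f x = f y"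
    have "z x \<noteq> Inl i" "z y \<noteq> Inl i" using x y by (auto simp: J_def z_def)
    moreover have "{Inl i, z x} = {Inl i, z y}" using e by (simp add: f_def)
    ultimately have "z x = z y" by (auto simp: doubleton_eq_iff)
    then show "x = y" using x y by (auto simp: z_def split: if_splits)
  qed
  have cJ: "card J = n - 1" using i by (simp add: J_def)
  have cardX: "card X = (n - 1) * 3"
    unfolding X_def card_image[OF injf] by (simp add: card_cartesian_product cJ)
  have fin: "finite X" unfolding X_def J_def by simp
  have Xv: "s \<in> verts ?H" if "s \<in> X" for s
  proof -
    obtain jh where jh: "jh \<in> J \<times> {0,1,2}" "s = f jh" using \<open>s \<in> X\<close> unfolding X_def by blast
    show ?thesis using sub_vert[OF nb[OF jh(1)] m] jh(2) by (simp add: f_def)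
  qed
  have Xr: "reach ?H 1 s (Orig (Inl i))" "reach ?H 1 (Orig (Inl i)) s" if "s \<in> X" for s
  proof -
    obtain jh where jh: "jh \<in> J \<times> {0,1,2}" "s = f jh" using \<open>s \<in> X\<close> unfolding X_def by blast
    show "reach ?H 1 s (Orig (Inl i))" using r_so1[OF nb[OF jh(1)] m] jh(2) by (simp add: f_def)
    show "reach ?H 1 (Orig (Inl i)) s" using r_os1[OF nb[OF jh(1)] m] jh(2) by (simp add: f_def)
  qed
  have iv: "Orig (Inl i) \<in> verts ?H" using i by (auto simp: verts_FSSD verts_GG)
  have Xn1: "c s \<noteq> 1" if "s \<in> X" for s
  proof
    assume "c s = 1"
    have "s \<noteq> Orig (Inl i)" using that by (auto simp: X_def f_def)
    from pack_lt[OF pc Xv[OF that] iv this _ Xr(1)[OF that]] show False using \<open>c s = 1\<close> ci by simp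
  qed
  have inj: "inj_on c X"
  proof (rule inj_onI, rule ccontr)
    fix s t assume s: "s \<in> X" and t: "t \<in> X" and e: "c s = c t" and ne: "s \<noteq> t"
    have "reach ?H (1 + 1) s t" by (rule reach_trans[OF Xr(1)[OF s] Xr(2)[OF t]])
    from pack_lt[OF pc Xv[OF s] Xv[OF t] ne e this] have "c s < 2" by simp
    moreover have "c s \<in> {1..a}" using pack_range[OF pc Xv[OF s]] .
    ultimately show False using Xn1[OF s] by simp
  qed
  have sub: "c ` X \<subseteq> {2..a}"
  proof
    fix k assume "k \<in> c ` X"
    then obtain s where s: "s \<in> X" "k = c s" by blast
    show "k \<in> {2..a}" using pack_range[OF pc Xv[OF s(1)]] Xn1[OF s(1)] s(2) by auto
  qed
  have "card X \<le> card {2..a}" by (rule card_inj_on_le[OF inj sub]) simp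
  then show False using cardX a n3 by simp
qed

lemma part2big:
  assumes n5: "n \<ge> 5" and p2: "p \<ge> 2" and m: "m \<ge> 1"
    and pc: "packing_coloring (FSSD m (GG n p)) a c" and a: "a \<le> n + 3" and i: "i \<in> {1..n}"
    and g: "g \<in> {1..p}" and cv: "c (Orig (Inr (i,g))) = 1"
  shows False
proof -
  let ?H = "FSSD m (GG n p)"
  obtain g' where g': "g' \<in> {1..p}" "g' = g + 1 \<or> g = g' + 1"
  proof (cases "g < p")
    case True then show ?thesis using that[of "g+1"] g by auto
  next
    case False then show ?thesis using that[of "g-1"] g p2 by auto
  qed
  define v where "v = (Inr (i,g) :: nat + nat \<times> nat)"
  define w where "w = (Inr (i,g') :: nat + nat \<times> nat)"
  define J where "J = {1..n} - {i}"
  define NV where "NV = Inl ` J \<union> {w}"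
  define fA where "fA = (\<lambda>z. Sub {v, z} (1::nat))"
  define A where "A = fA ` NV"
  define U where "U = (\<lambda>j. Orig (Inl j :: nat + nat \<times> nat)) ` J"
  have nbA: "adj (GG n p) v z" if "z \<in> NV" for z
    using that i g g' by (auto simp: NV_def J_def v_def w_def)
  have zv: "z \<noteq> v" if "z \<in> NV" for z
    using that g' by (auto simp: NV_def v_def w_def)
  have injfA: "inj_on fA NV"
  proof (rule inj_onI)
    fix x y assume x: "x \<in> NV" and y: "y \<in> NV" and e: "fA x = fA y"
    have "{v, x} = {v, y}" using e by (simp add: fA_def)
    then show "x = y" using zv[OF x] zv[OF y] by (auto simp: doubleton_eq_iff)
  qed
  have cJ: "card J = n - 1" using i by (simp add: J_def)
  have finJ: "finite J" by (simp add: J_def)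
  have cNV: "card NV = n"
  proof -
    have "w \<notin> Inl ` J" by (auto simp: w_def)
    moreover have "card (Inl ` J :: (nat + nat \<times> nat) set) = n - 1"
      using card_image[of Inl J] cJ by (simp add: inj_on_def)
    ultimately show ?thesis unfolding NV_def using finJ n5 by simp
  qed
  have cA: "card A = n" unfolding A_def card_image[OF injfA] cNV ..
  have cU: "card U = n - 1" unfolding U_def using card_image[of "\<lambda>j. Orig (Inl j :: nat + nat \<times> nat)" J] cJ
    by (simp add: inj_on_def)
  have finA: "finite A" "finite U" using finJ by (simp_all add: A_def NV_def U_def)
  have vv: "Orig v \<in> verts ?H" using i g by (auto simp: verts_FSSD verts_GG v_def)
  have Av: "s \<in> verts ?H" and Ar: "reach ?H 1 s (Orig v)" "reach ?H 1 (Orig v) s"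
    if "s \<in> A" for s
  proof -
    obtain z where z: "z \<in> NV" "s = fA z" using \<open>s \<in> A\<close> unfolding A_def by blast
    show "s \<in> verts ?H" using sub_vert[OF nbA[OF z(1)] m] z(2) by (simp add: fA_def)
    show "reach ?H 1 s (Orig v)" using r_so1[OF nbA[OF z(1)] m] z(2) by (simp add: fA_def)
    show "reach ?H 1 (Orig v) s" using r_os1[OF nbA[OF z(1)] m] z(2) by (simp add: fA_def)
  qed
  have An1: "c s \<noteq> 1" if "s \<in> A" for s
  proof
    assume "c s = 1"
    have "s \<noteq> Orig v" using that by (auto simp: A_def fA_def)
    from pack_lt[OF pc Av[OF that] vv this _ Ar(1)[OF that]] show False using \<open>c s = 1\<close> cv
      by (simp add: v_def)
  qed
  have rng: "c s \<in> {1..a}" if "s \<in> verts ?H" for s using pack_range[OF pc that] .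
  have injA: "inj_on c A"
  proof (rule inj_onI, rule ccontr)
    fix s t assume s: "s \<in> A" and t: "t \<in> A" and e: "c s = c t" and ne: "s \<noteq> t"
    have "reach ?H (1 + 1) s t" by (rule reach_trans[OF Ar(1)[OF s] Ar(2)[OF t]])
    from pack_lt[OF pc Av[OF s] Av[OF t] ne e this] have "c s < 2" by simp
    then show False using An1[OF s] rng[OF Av[OF s]] by simp
  qed
  have Uv: "s \<in> verts ?H" if "s \<in> U" for s using that by (auto simp: U_def J_def verts_FSSD verts_GG)
  have Un1: "c s \<noteq> 1" if "s \<in> U" for s
    using that part1[OF _ p2 m pc a] n5 by (auto simp: U_def J_def)
  have injU: "inj_on c U"
  proof (rule inj_onI, rule ccontr)
    fix s t assume s: "s \<in> U" and t: "t \<in> U" and e: "c s = c t" and ne: "s \<noteq> t"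
    obtain j k where jk: "j \<in> J" "k \<in> J" "s = Orig (Inl j)" "t = Orig (Inl k)" using s t by (auto simp: U_def)
    have "adj (GG n p) (Inl j) (Inl k)" using jk ne by (auto simp: J_def)
    from pack_lt[OF pc Uv[OF s] Uv[OF t] ne e] r_oo[OF this m] jk have "c s < 2" by simp
    then show False using Un1[OF s] rng[OF Uv[OF s]] by simp
  qed
  have cross: "c s = 2" if s: "s \<in> A" and u: "u \<in> U" and e: "c s = c u" for s u
  proof -
    obtain z where z: "z \<in> NV" "s = fA z" using s unfolding A_def by blast
    obtain j where j: "j \<in> J" "u = Orig (Inl j)" using u unfolding U_def by blast
    have ne: "s \<noteq> u" using z j by (simp add: fA_def)
    have "\<exists>k\<le>3. reach ?H k s u"
    proof -
      consider "z = Inl j" | k where "k \<in> J" "k \<noteq> j" "z = Inl k" | "z = w" using z(1) unfolding NV_def by blast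
      then show ?thesis
      proof cases
        case 1
        have "reach ?H 1 s u" using r_so2[OF nbA[OF z(1)] m] z j 1 by (simp add: fA_def)
        then show ?thesis by (intro exI[of _ 1]) simp
      next
        case 2
        have a1: "reach ?H 1 s (Orig (Inl k))" using r_so2[OF nbA[OF z(1)] m] z 2 by (simp add: fA_def)
        have "adj (GG n p) (Inl k) (Inl j)" using 2 j by (auto simp: J_def)
        from reach_trans[OF a1 r_oo[OF this m]] j(2) have r: "reach ?H (1+2) s u" by simp
        show ?thesis using r by (intro exI[of _ "1+2"]) simp
      next
        case 3
        have "adj (GG n p) v (Inl j)" using j i g by (auto simp: J_def v_def)
        from reach_trans[OF Ar(1)[OF s] r_oo[OF this m]] j(2) have r: "reach ?H (1+2) s u" by simp
        show ?thesis using r by (intro exI[of _ "1+2"]) simp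
      qed
    qed
    then obtain k where "k \<le> 3" "reach ?H k s u" by blast
    from pack_le[OF pc Av[OF s] Uv[OF u] ne e this(2) this(1)] have "c s < 3" .
    then show ?thesis using An1[OF s] rng[OF Av[OF s]] by simp
  qed
  have int: "c ` A \<inter> c ` U \<subseteq> {2}" using cross by blast
  have un: "c ` A \<union> c ` U \<subseteq> {2..a}"
  proof
    fix k assume "k \<in> c ` A \<union> c ` U"
    then show "k \<in> {2..a}" using An1 Un1 rng Av Uv by fastforce
  qed
  have c1: "card (c ` A \<inter> c ` U) \<le> 1" using card_mono[OF _ int] by simp
  have c2: "card (c ` A \<union> c ` U) \<le> a - 1" using card_mono[OF _ un] by simp
  have "card (c ` A) + card (c ` U) = card (c ` A \<union> c ` U) + card (c ` A \<inter> c ` U)"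
    using card_Un_Int[of "c ` A" "c ` U"] finA by simp
  moreover have "card (c ` A) = n" "card (c ` U) = n - 1"
    using card_image[OF injA] card_image[OF injU] cA cU by simp_all
  ultimately show False using c1 c2 a n5 by simp
qed

lemma U_ok:
  assumes g: "good n0 n p \<sigma> \<tau>" and L: "list_all (wfs n0) L"
    and U: "\<forall>j\<in>{1..n}. c (Orig (Inl j)) \<noteq> 1"
  shows "\<forall>s\<in>set L. isU s \<longrightarrow> c (Phi \<sigma> \<tau> s) \<noteq> 1"
proof (intro ballI impI)
  fix s assume s: "s \<in> set L" and u: "isU s"
  then obtain b where b: "s = SO (Inl b)" by (auto simp: isU_def split: sv.splits sum.splits)
  have "inr n0 (Inl b)" using L s b by (auto simp: list_all_iff)
  then have "\<sigma> b \<in> {1..n}" using goodD(1)[OF g] by auto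
  then show "c (Phi \<sigma> \<tau> s) \<noteq> 1" using U b by simp
qed

lemma part2small:
  assumes n34: "n = 3 \<or> n = 4" and p2: "p \<ge> 2" and m: "m \<ge> 1"
    and pc: "packing_coloring (FSSD m (GG n p)) a c" and a: "a \<le> n + 3" and i: "i \<in> {1..n}"
    and g: "g \<in> {1..p}" and cv: "c (Orig (Inr (i,g))) = 1"
  shows False
proof -
  obtain g' where g': "g' \<in> {1..p}" "g' = g + 1 \<or> g = g' + 1"
  proof (cases "g < p")
    case True then show ?thesis using that[of "g+1"] g by auto
  next
    case False then show ?thesis using that[of "g-1"] g p2 by auto
  qed
  define \<sigma> where "\<sigma> = (\<lambda>j::nat. if j = 1 then i else if j = i then 1 else j)"
  define \<tau> where "\<tau> = (\<lambda>h::nat. if h = 1 then g else g')"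
  have gd: "good n n p \<sigma> \<tau>"
    unfolding good_def
  proof (intro conjI)
    show "\<forall>a\<in>{1..n}. \<sigma> a \<in> {1..n}" using i by (auto simp: \<sigma>_def)
    show "inj_on \<sigma> {1..n}"
    proof (rule inj_onI)
      fix x y assume "x \<in> {1..n}" "y \<in> {1..n}" "\<sigma> x = \<sigma> y"
      then show "x = y" unfolding \<sigma>_def
        by (cases "x = 1"; cases "x = i"; cases "y = 1"; cases "y = i") simp_all
    qed
    show "\<tau> 1 \<in> {1..p}" "\<tau> 2 \<in> {1..p}" "\<tau> 2 = \<tau> 1 + 1 \<or> \<tau> 1 = \<tau> 2 + 1"
      using g g' by (auto simp: \<tau>_def)
  qed
  have U: "\<forall>j\<in>{1..n}. c (Orig (Inl j)) \<noteq> 1"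
    using part1[OF _ p2 m pc a] n34 by auto
  have v0: "c (Phi \<sigma> \<tau> (SO (Inr (1,1)))) = 1" using cv by (simp add: \<sigma>_def \<tau>_def)
  show False
  proof (cases "n = 3")
    case True
    have gd3: "good 3 n p \<sigma> \<tau>" using gd True by simp
    have a6: "a \<le> 6" using a True by simp
    have "srch (mkc V3 [] L3) (map (domf (SO (Inr (1,1))) 6) L3) []"
      by (rule finite_check[OF gd3 m pc a6 _ L3_ok(4) L3_ok(1-3) U_ok[OF gd3 L3_ok(1) U] v0]) simp
    then show False using L3_srch by simp
  next
    case False
    then have n4: "n = 4" using n34 by simp
    have gd4: "good 4 n p \<sigma> \<tau>" using gd n4 by simp
    have a7: "a \<le> 7" using a n4 by simp
    have "srch (mkc V4 [] L4) (map (domf (SO (Inr (1,1))) 7) L4) []"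
      by (rule finite_check[OF gd4 m pc a7 _ L4_ok(4) L4_ok(1-3) U_ok[OF gd4 L4_ok(1) U] v0]) simp
    then show False using L4_srch by simp
  qed
qed

theorem lemma1:
  fixes n p m a :: nat and c :: "(nat + (nat \<times> nat)) fssd_vertex \<Rightarrow> nat"
  assumes "n \<ge> 3" and "p \<ge> 2" and "m \<ge> 1"
    and "packing_coloring (FSSD m (nbh_corona (complete_graph n) (path_graph p))) a c"
    and "a \<le> n + 3"
  shows "(\<forall>i\<in>{1..n}. c (Orig (Inl i)) \<noteq> 1) \<and>
         (\<forall>i\<in>{1..n}. \<forall>g\<in>{1..p}. c (Orig (Inr (i, g))) \<noteq> 1)"
proof (intro conjI ballI)
  fix i assume i: "i \<in> {1..n}"
  show "c (Orig (Inl i)) \<noteq> 1" by (rule part1[OF assms i])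
next
  fix i g assume i: "i \<in> {1..n}" and g: "g \<in> {1..p}"
  show "c (Orig (Inr (i, g))) \<noteq> 1"
  proof
    assume cv: "c (Orig (Inr (i, g))) = 1"
    show False
    proof (cases "n \<ge> 5")
      case True show False by (rule part2big[OF True assms(2-5) i g cv])
    next
      case False
      then have "n = 3 \<or> n = 4" using assms(1) by auto
      then show False using part2small[OF _ assms(2-5) i g cv] by blast
    qed
  qed
qed

end
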